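(* Let $\mathcal{E}^\ell$ be a left (resp. right) simple infinitesimal earthquake along a geodesic $\ell$ of $\mathbb{H}^2$, and let $S_1,S_2$ be two strata of the lamination $\{\ell\}$. Let $Y=\mathrm{Comp}(S_1,S_2)=K_{S_2}-K_{S_1}=\Lambda(\sigma)$ be the comparison Killing field, and let $\phi_Y(\eta)=\langle(1,\eta),\sigma\rangle$ for $\eta\in\overline{\mathbb{D}^2}$ (on $\mathbb{S}^1$ this is the support function of $Y$). Then $\phi_Y(x)\ge0$ (resp. $\phi_Y(x)\le0$) for every $x$ in the closure $\overline{S_2}\subset\overline{\mathbb{D}^2}$, and $\phi_Y(x)\le0$ (resp. $\phi_Y(x)\ge0$) for every $x\in\overline{S_1}$.
   Context: $\mathbb{R}^{1,2}$ is $\mathbb{R}^3$ with $\langle x,y\rangle=-x_0y_0+x_1y_1+x_2y_2$; $\mathbb{H}^2$ is identified with the Klein disk $\mathbb{D}^2$ (boundary $\mathbb{S}^1$) via $\Pi(x_0,x_1,x_2)=(x_1/x_0,x_2/x_0)$. Killing fields: $\Lambda(\sigma):\eta\mapsto\mathrm{d}_{(1,\eta)}\Pi((1,\eta)\boxtimes\sigma)$ with $\langle x\boxtimes y,v\rangle=\det(x,y,v)$; hyperbolic if $\langle\sigma,\sigma\rangle>0$, axis $\Pi(\mathbb{H}^2\cap\sigma^\perp)$. The support function of a vector field $Y$ on $\mathbb{S}^1$ is $\phi_Y$ with $Y(z)=iz\phi_Y(z)$; for $Y=\Lambda(\sigma)$ it equals $z\mapsto\langle(1,z),\sigma\rangle$.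 A simple infinitesimal earthquake along $\ell$ is an infinitesimal earthquake along the lamination $\{\ell\}$, whose strata are $\ell$ and the two components of $\mathbb{D}^2\setminus\ell$. A left (resp. right) infinitesimal earthquake along a lamination: a vector field on $\mathbb{H}^2$ equal on each stratum $S$ to a Killing field $K_S$, such that for strata $S,S'$, $\mathfrak{a}=K_{S'}-K_S$ vanishes only if one of $S,S'$ is in the closure of the other, and otherwise is hyperbolic with axis $\ell'$ weakly separating $S,S'$ and translating to the left (resp. right) seen from $S$ to $S'$ (for an arc $c$ from $S$ to $S'$ crossing $\ell'$ once at $x_0=c(t_0)$ and $w$ tangent to $\ell'$ at $x_0$ pointing towards $\exp(t\mathfrak{a})x_0$, $t>0$, $(c'(t_0),w)$ is positively, resp. negatively, oriented). *)

theory Defs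
  imports "HOL-Analysis.Analysis"
begin

text \<open>Minkowski space R^{1,2}: vectors of type real^3, components x$1, x$2, x$3
  play the roles of x_0, x_1, x_2.\<close>

definition mink :: "real^3 \<Rightarrow> real^3 \<Rightarrow> real" where
  "mink x y = - x$1 * y$1 + x$2 * y$2 + x$3 * y$3"

definition mcross :: "real^3 \<Rightarrow> real^3 \<Rightarrow> real^3" where
  "mcross x y = vector [ -(x$2 * y$3 - x$3 * y$2),
                          x$3 * y$1 - x$1 * y$3,
                          x$1 * y$2 - x$2 * y$1 ]"

lemma mink_mcross: "mink (mcross x y) v = det (vector [x, y, v] :: real^3^3)"
  by (simp add: mink_def mcross_def det_3 algebra_simps)

definition hyp :: "(real^3) set" where
  "hyp = {x. mink x x = -1 \<and> x$1 > 0}"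

definition Pi_proj :: "real^3 \<Rightarrow> complex" where
  "Pi_proj x = Complex (x$2 / x$1) (x$3 / x$1)"

definition disk :: "complex set" where
  "disk = ball 0 1"

definition lift :: "complex \<Rightarrow> real^3" where
  "lift \<eta> = vector [1, Re \<eta>, Im \<eta>]"

definition Lam :: "real^3 \<Rightarrow> complex \<Rightarrow> complex" where
  "Lam \<sigma> \<eta> = frechet_derivative Pi_proj (at (lift \<eta>)) (mcross (lift \<eta>) \<sigma>)"

definition hyperbolic :: "real^3 \<Rightarrow> bool" where
  "hyperbolic \<sigma> \<longleftrightarrow> mink \<sigma> \<sigma> > 0"

definition axis :: "real^3 \<Rightarrow> complex set" where
  "axis \<sigma> = Pi_proj ` (hyp \<inter> {x. mink x \<sigma> = 0})"

definition phi :: "real^3 \<Rightarrow> complex \<Rightarrow> real" where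
  "phi \<sigma> \<eta> = mink (lift \<eta>) \<sigma>"

text \<open>Geodesics of the Klein disk: open chords with endpoints on the unit circle.\<close>
definition geodesic :: "complex set \<Rightarrow> bool" where
  "geodesic l \<longleftrightarrow> (\<exists>a b. a \<noteq> b \<and> norm a = 1 \<and> norm b = 1 \<and> l = open_segment a b)"

definition lamination_strata :: "complex set set \<Rightarrow> complex set set" where
  "lamination_strata L = L \<union> components (disk - \<Union>L)"

definition weakly_separates :: "complex set \<Rightarrow> complex set \<Rightarrow> complex set \<Rightarrow> bool" where
  "weakly_separates l A B \<longleftrightarrow>
     (\<exists>C C'. C \<in> components (disk - l) \<and> C' \<in> components (disk - l) \<and> C \<noteq> C'
        \<and> A \<subseteq> closure C \<and> B \<subseteq> closure C')"

definition orient :: "complex \<Rightarrow> complex \<Rightarrow> real" where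
  "orient u v = Re u * Im v - Im u * Re v"

text \<open>Integral curves of a vector field (used for t |-> exp(t a) x0).\<close>
definition flow_line :: "(complex \<Rightarrow> complex) \<Rightarrow> (real \<Rightarrow> complex) \<Rightarrow> complex \<Rightarrow> bool" where
  "flow_line X \<gamma> x0 \<longleftrightarrow> \<gamma> 0 = x0 \<and> (\<forall>t. (\<gamma> has_vector_derivative X (\<gamma> t)) (at t))"

definition tangent_towards :: "real^3 \<Rightarrow> complex set \<Rightarrow> complex \<Rightarrow> complex \<Rightarrow> bool" where
  "tangent_towards a l x0 w \<longleftrightarrow>
     w \<noteq> 0 \<and> (\<exists>e>0. \<forall>s. \<bar>s\<bar> < e \<longrightarrow> x0 + of_real s * w \<in> l)
     \<and> (\<forall>\<gamma>. flow_line (Lam a) \<gamma> x0 \<longrightarrow> (\<forall>t>0. \<exists>s>0. \<gamma> t = x0 + of_real s * w))"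

text \<open>The hyperbolic field Lambda(a) with axis l translates to the left (eps = 1)
  resp. right (eps = -1) seen from A to B.\<close>
definition translates :: "real \<Rightarrow> real^3 \<Rightarrow> complex set \<Rightarrow> complex set \<Rightarrow> complex set \<Rightarrow> bool" where
  "translates eps a l A B \<longleftrightarrow>
     (\<forall>c t0 v w. arc c \<and> path_image c \<subseteq> disk \<and> pathstart c \<in> A \<and> pathfinish c \<in> B
        \<and> {t \<in> {0..1}. c t \<in> l} = {t0}
        \<and> (c has_vector_derivative v) (at t0 within {0..1})
        \<and> tangent_towards a l (c t0) w \<and> orient v w \<noteq> 0
        \<longrightarrow> eps * orient v w > 0)"

definition inf_earthquake ::
  "real \<Rightarrow> complex set set \<Rightarrow> (complex \<Rightarrow> complex) \<Rightarrow> (complex set \<Rightarrow> real^3) \<Rightarrow> bool" where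
  "inf_earthquake eps L E K \<longleftrightarrow>
     (\<forall>S\<in>lamination_strata L. \<forall>\<eta>\<in>S. E \<eta> = Lam (K S) \<eta>) \<and>
     (\<forall>S\<in>lamination_strata L. \<forall>S'\<in>lamination_strata L.
        ((\<forall>\<eta>\<in>disk. Lam (K S' - K S) \<eta> = 0) \<longrightarrow> S \<subseteq> closure S' \<or> S' \<subseteq> closure S) \<and>
        (\<not> (\<forall>\<eta>\<in>disk. Lam (K S' - K S) \<eta> = 0) \<longrightarrow>
           hyperbolic (K S' - K S) \<and> weakly_separates (axis (K S' - K S)) S S' \<and>
           translates eps (K S' - K S) (axis (K S' - K S)) S S'))"

definition left_inf_earthquake where "left_inf_earthquake = inf_earthquake 1"
definition right_inf_earthquake where "right_inf_earthquake = inf_earthquake (-1)"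

end

theory Submission
  imports Defs
begin
lemma Re_vd: "(\<gamma> has_vector_derivative v) F \<Longrightarrow> ((\<lambda>t. Re (\<gamma> t)) has_real_derivative Re v) F"
  unfolding has_vector_derivative_def has_field_derivative_def
  proof -
  assume "(\<gamma> has_derivative (\<lambda>x. x *\<^sub>R v)) F"
  from bounded_linear.has_derivative[OF bounded_linear_Re this]
  show "((\<lambda>t. Re (\<gamma> t)) has_derivative (*) (Re v)) F"
    by (simp add: mult.commute[of _ "Re v"])
qed

lemma Im_vd: "(\<gamma> has_vector_derivative v) F \<Longrightarrow> ((\<lambda>t. Im (\<gamma> t)) has_real_derivative Im v) F"
  unfolding has_vector_derivative_def has_field_derivative_def
  proof -
  assume "(\<gamma> has_derivative (\<lambda>x. x *\<^sub>R v)) F"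
  from bounded_linear.has_derivative[OF bounded_linear_Im this]
  show "((\<lambda>t. Im (\<gamma> t)) has_derivative (*) (Im v)) F"
    by (simp add: mult.commute[of _ "Im v"])
qed

lemma phi_eq: "phi \<sigma> \<eta> = - \<sigma>$1 + Re \<eta> * \<sigma>$2 + Im \<eta> * \<sigma>$3"
  by (simp add: phi_def mink_def lift_def)

lemma Pi_deriv:
  assumes "x$1 = 1"
  shows "(Pi_proj has_derivative (\<lambda>v. Complex (v$2 - x$2 * v$1) (v$3 - x$3 * v$1))) (at x)"
proof -
  have e: "Pi_proj = (\<lambda>x. complex_of_real (x$2 / x$1) + \<i> * complex_of_real (x$3 / x$1))"
    by (auto simp: Pi_proj_def fun_eq_iff complex_eq_iff)
  have "((\<lambda>x. complex_of_real (x$2 / x$1) + \<i> * complex_of_real (x$3 / x$1)) has_derivative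
     (\<lambda>v. complex_of_real ((v$2 * x$1 - x$2 * v$1) / (x$1 * x$1)) + \<i> * complex_of_real ((v$3 * x$1 - x$3 * v$1) / (x$1 * x$1)))) (at x)"
    using assms
    by (auto intro!: derivative_eq_intros bounded_linear.has_derivative[OF bounded_linear_of_real]
           bounded_linear.has_derivative[OF bounded_linear_vec_nth]
          simp: field_simps)
  then show ?thesis unfolding e
    by (rule has_derivative_eq_rhs) (use assms in \<open>auto simp: fun_eq_iff complex_eq_iff\<close>)
qed


lemma lift1: "lift \<eta> $ 1 = 1"
  by (simp add: lift_def)

lemma Lam_eq: "Lam \<sigma> \<eta> = Complex (Im \<eta> * \<sigma>$1 - \<sigma>$3 - Re \<eta> * Im \<eta> * \<sigma>$2 + (Re \<eta>)^2 * \<sigma>$3)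
   (\<sigma>$2 - Re \<eta> * \<sigma>$1 - (Im \<eta>)^2 * \<sigma>$2 + Re \<eta> * Im \<eta> * \<sigma>$3)"
  unfolding Lam_def frechet_derivative_at[OF Pi_deriv[OF lift1], symmetric]
  by (simp add: mcross_def lift_def power2_eq_square algebra_simps)

lemma disk_0: "0 \<in> disk" and disk_half: "(1/2::complex) \<in> disk"
  by (auto simp: disk_def)

lemma Lam_zero:
  assumes "\<forall>\<eta>\<in>disk. Lam \<sigma> \<eta> = 0" shows "\<sigma> = 0"
proof -
  have a: "Lam \<sigma> 0 = 0" "Lam \<sigma> (1/2) = 0" using assms disk_0 disk_half by auto
  then have "\<sigma>$2 = 0" "\<sigma>$3 = 0" by (auto simp: Lam_eq complex_eq_iff)
  moreover with a have "\<sigma>$1 = 0" by (auto simp: Lam_eq complex_eq_iff)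
  ultimately show ?thesis by (simp add: vec_eq_iff forall_3)
qed

lemma axis_iff:
  assumes "\<eta> \<in> disk"
  shows "\<eta> \<in> axis \<sigma> \<longleftrightarrow> phi \<sigma> \<eta> = 0"
proof
  assume "\<eta> \<in> axis \<sigma>"
  then obtain x where x: "x \<in> hyp" "mink x \<sigma> = 0" "\<eta> = Pi_proj x"
    unfolding axis_def by auto
  then have "x$1 > 0" by (simp add: hyp_def)
  with x show "phi \<sigma> \<eta> = 0"
    by (simp add: phi_eq Pi_proj_def mink_def field_simps)
next
  assume ph: "phi \<sigma> \<eta> = 0"
  have n: "(Re \<eta>)^2 + (Im \<eta>)^2 < 1"
    using assms by (simp add: disk_def cmod_power2[symmetric] abs_square_less_1)
  define r where "r = sqrt (1 - (Re \<eta>)^2 - (Im \<eta>)^2)"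
  have r: "r > 0" "r^2 = 1 - (Re \<eta>)^2 - (Im \<eta>)^2" using n by (auto simp: r_def)
  define x :: "real^3" where "x = vector [1/r, Re \<eta> / r, Im \<eta> / r]"
  have "mink x x = (- 1 + (Re \<eta>)^2 + (Im \<eta>)^2) / r^2"
    using r(1) by (simp add: x_def mink_def power2_eq_square field_simps)
  also have "\<dots> = -1" using r by (simp add: field_simps)
  finally have "x \<in> hyp" using r by (simp add: hyp_def x_def)
  moreover have "mink x \<sigma> = 0" using ph r
    by (simp add: x_def mink_def phi_eq field_simps)
  moreover have "Pi_proj x = \<eta>" using r by (simp add: x_def Pi_proj_def complex_eq_iff)
  ultimately show "\<eta> \<in> axis \<sigma>" unfolding axis_def by force
qed

lemma continuous_phi[continuous_intros]: "continuous_on S (phi \<sigma>)"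
  unfolding phi_eq[abs_def] by (intro continuous_intros)

lemma comp_sign:
  assumes "C \<in> components (disk - axis \<sigma>)"
  shows "(\<forall>x\<in>C. phi \<sigma> x > 0) \<or> (\<forall>x\<in>C. phi \<sigma> x < 0)"
proof (rule ccontr)
  have nz: "phi \<sigma> x \<noteq> 0" if "x \<in> C" for x
    using in_components_subset[OF assms] that axis_iff by blast
  assume "\<not> ?thesis"
  then obtain x y where xy: "x \<in> C" "y \<in> C" "phi \<sigma> x \<le> 0" "phi \<sigma> y \<ge> 0"
    by (meson linorder_not_le)
  have "connected (phi \<sigma> ` C)"
    by (rule connected_continuous_image[OF continuous_phi in_components_connected[OF assms]])
  from connectedD_interval[OF this, of "phi \<sigma> x" "phi \<sigma> y" 0] xy
  have "0 \<in> phi \<sigma> ` C" by auto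
  with nz show False by force
qed

lemma comp_unique:
  assumes "C \<in> components (disk - axis \<sigma>)" "C' \<in> components (disk - axis \<sigma>)"
    and "\<forall>x\<in>C. d * phi \<sigma> x > 0" "\<forall>x\<in>C'. d * phi \<sigma> x > 0"
  shows "C = C'"
proof -
  define P where "P = disk \<inter> {x. d * phi \<sigma> x > 0}"
  have e: "{x. d * phi \<sigma> x > 0} = {x. inner (of_real d * Complex (\<sigma>$2) (\<sigma>$3)) x > d * \<sigma>$1}"
    by (auto simp: phi_eq inner_complex_def algebra_simps)
  have "convex P" unfolding P_def e disk_def
    by (intro convex_Int convex_ball convex_halfspace_gt)
  then have cP: "connected P" by (rule convex_connected)
  have sub: "P \<subseteq> disk - axis \<sigma>"
    using axis_iff by (force simp: P_def)
  have CP: "C \<subseteq> P" "C' \<subseteq> P" using assms in_components_subset by (fastforce simp: P_def)+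
  have "P \<subseteq> C"
    using components_maximal[OF assms(1) cP sub] CP in_components_nonempty[OF assms(1)] by blast
  with CP have "C' \<subseteq> C" by blast
  then show ?thesis
    using components_eq[OF assms(1,2)] in_components_nonempty[OF assms(2)] by blast
qed


lemma lin_ode:
  fixes f k :: "real \<Rightarrow> real"
  assumes T: "0 \<le> T" and k: "continuous_on {0..T} k"
    and d: "\<And>t. t \<in> {0..T} \<Longrightarrow> (f has_real_derivative (k t * f t)) (at t within {0..T})"
    and t: "t \<in> {0..T}"
  shows "f t = f 0 * exp (integral {0..t} k)"
proof -
  define K where "K u = integral {0..u} k" for u
  have dK: "(K has_real_derivative k u) (at u within {0..T})" if "u \<in> {0..T}" for u
    unfolding K_def has_real_derivative_iff_has_vector_derivative
    by (rule integral_has_vector_derivative[OF k that])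
  have "(( \<lambda>u. f u * exp (- K u)) has_real_derivative 0) (at u within {0..T})" if "u \<in> {0..T}" for u
    using d[OF that] dK[OF that]
    by (auto intro!: derivative_eq_intros simp: algebra_simps)
  from has_field_derivative_zero_constant[OF convex_real_interval(5) this]
  obtain c where c: "\<And>u. u \<in> {0..T} \<Longrightarrow> f u * exp (- K u) = c" by blast
  have "K 0 = 0" by (simp add: K_def)
  with c[of 0] T have "c = f 0" by simp
  with c[OF t] have "f t * exp (- K t) = f 0" by simp
  then show ?thesis by (simp add: K_def exp_minus field_simps)
qed

lemma Lam_on_axis:
  assumes "phi \<sigma> \<eta> = 0"
  shows "Lam \<sigma> \<eta> = of_real (1 - (Re \<eta>)^2 - (Im \<eta>)^2) * Complex (- \<sigma>$3) (\<sigma>$2)"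
proof -
  have s1: "\<sigma>$1 = Re \<eta> * \<sigma>$2 + Im \<eta> * \<sigma>$3" using assms by (simp add: phi_eq)
  show ?thesis unfolding Lam_eq s1
    by (simp add: complex_eq_iff power2_eq_square algebra_simps)
qed

lemma flow_forward:
  assumes hyp: "hyperbolic \<sigma>" and x0: "x0 \<in> disk" "phi \<sigma> x0 = 0"
    and fl: "flow_line (Lam \<sigma>) \<gamma> x0" and t: "t > 0"
  shows "\<exists>s>0. \<gamma> t = x0 + of_real s * Complex (- \<sigma>$3) (\<sigma>$2)"
proof -
  have g0: "\<gamma> 0 = x0" and dg: "\<And>u. (\<gamma> has_vector_derivative Lam \<sigma> (\<gamma> u)) (at u)"
    using fl by (auto simp: flow_line_def)
  have N: "(\<sigma>$2)^2 + (\<sigma>$3)^2 > 0"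
    using hyp by (simp add: hyperbolic_def mink_def power2_eq_square) (smt (verit) zero_le_square)
  have cg: "continuous_on S \<gamma>" for S
    using dg by (meson continuous_at_imp_continuous_on has_vector_derivative_continuous)
  have da: "((\<lambda>u. Re (\<gamma> u)) has_real_derivative Re (Lam \<sigma> (\<gamma> u))) (at u within S)" for u S
    using Re_vd[OF dg] has_field_derivative_at_within by blast
  have db: "((\<lambda>u. Im (\<gamma> u)) has_real_derivative Im (Lam \<sigma> (\<gamma> u))) (at u within S)" for u S
    using Im_vd[OF dg] has_field_derivative_at_within by blast
  define k where "k u = - (Im (\<gamma> u) * \<sigma>$2 - Re (\<gamma> u) * \<sigma>$3)" for u
  have ck: "continuous_on S k" for S
    unfolding k_def[abs_def] by (intro continuous_intros cg)
  have f0: "phi \<sigma> (\<gamma> u) = 0" if "u \<in> {0..t}" for u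
  proof -
    have "(\<lambda>u. phi \<sigma> (\<gamma> u)) u = (\<lambda>u. phi \<sigma> (\<gamma> u)) 0 * exp (integral {0..u} k)"
    proof (rule lin_ode[of t k _ u])
      fix v assume "v \<in> {0..t}"
      show "((\<lambda>u. phi \<sigma> (\<gamma> u)) has_real_derivative k v * phi \<sigma> (\<gamma> v)) (at v within {0..t})"
        unfolding phi_eq
        by (rule derivative_eq_intros da db refl)+
           (simp add: Lam_eq k_def power2_eq_square algebra_simps)
    qed (use t that ck in auto)
    then show ?thesis using g0 x0 by simp
  qed
  have Qpos: "1 - (Re (\<gamma> u))^2 - (Im (\<gamma> u))^2 > 0" if "u \<in> {0..t}" for u
  proof -
    have "(\<lambda>u. 1 - (Re (\<gamma> u))^2 - (Im (\<gamma> u))^2) u =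
        (\<lambda>u. 1 - (Re (\<gamma> u))^2 - (Im (\<gamma> u))^2) 0 * exp (integral {0..u} (\<lambda>u. 2 * k u))"
    proof (rule lin_ode[of t "\<lambda>u. 2 * k u" _ u])
      fix v assume "v \<in> {0..t}"
      show "((\<lambda>u. 1 - (Re (\<gamma> u))^2 - (Im (\<gamma> u))^2) has_real_derivative
          2 * k v * (1 - (Re (\<gamma> v))^2 - (Im (\<gamma> v))^2)) (at v within {0..t})"
        by (rule derivative_eq_intros da db refl)+
           (simp add: Lam_eq k_def power2_eq_square algebra_simps)
    qed (use t that ck in \<open>auto intro!: continuous_intros\<close>)
    moreover have "(Re x0)^2 + (Im x0)^2 < 1"
      using x0 by (simp add: disk_def cmod_power2[symmetric] abs_square_less_1)
    ultimately show ?thesis using g0 by simp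
  qed
  define N where "N = (\<sigma>$2)^2 + (\<sigma>$3)^2"
  define s where "s u = ((Re (\<gamma> u) - Re x0) * (- \<sigma>$3) + (Im (\<gamma> u) - Im x0) * \<sigma>$2) / N" for u
  have ds: "\<exists>y. (s has_real_derivative y) (at u) \<and> y > 0" if "0 \<le> u" "u \<le> t" for u
  proof -
    have "(s has_real_derivative (Re (Lam \<sigma> (\<gamma> u)) * (- \<sigma>$3) + Im (Lam \<sigma> (\<gamma> u)) * \<sigma>$2) / N) (at u)"
      unfolding s_def[abs_def] using N dg
      by (auto intro!: derivative_eq_intros simp: N_def)
    moreover have "(Re (Lam \<sigma> (\<gamma> u)) * (- \<sigma>$3) + Im (Lam \<sigma> (\<gamma> u)) * \<sigma>$2)
        = (1 - (Re (\<gamma> u))^2 - (Im (\<gamma> u))^2) * N"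
      unfolding Lam_on_axis[OF f0[of u, OF atLeastAtMost_iff[THEN iffD2, OF conjI, OF that]]]
      by (simp add: N_def power2_eq_square algebra_simps)
    moreover have "N \<noteq> 0" using N unfolding N_def by linarith
    ultimately show ?thesis using Qpos[of u] that by auto
  qed
  have "s 0 < s t" by (rule DERIV_pos_imp_increasing[OF t ds])
  then have sp: "s t > 0" using g0 by (simp add: s_def)
  have ph: "(Re (\<gamma> t) - Re x0) * \<sigma>$2 + (Im (\<gamma> t) - Im x0) * \<sigma>$3 = 0"
    using f0[of t] x0(2) t by (simp add: phi_eq algebra_simps)
  have "\<gamma> t = x0 + of_real (s t) * Complex (- \<sigma>$3) (\<sigma>$2)"
  proof -
    have Nz: "N \<noteq> 0" using N unfolding N_def by linarith
    define d1 where "d1 = Re (\<gamma> t) - Re x0"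
    define d2 where "d2 = Im (\<gamma> t) - Im x0"
    have ph': "d1 * \<sigma>$2 + d2 * \<sigma>$3 = 0" using ph by (simp add: d1_def d2_def)
    have st: "s t = (d1 * (- \<sigma>$3) + d2 * \<sigma>$2) / N" by (simp add: s_def d1_def d2_def)
    have "d1 * N - (d1 * (- \<sigma>$3) + d2 * \<sigma>$2) * (- \<sigma>$3) = \<sigma>$2 * (d1 * \<sigma>$2 + d2 * \<sigma>$3)"
      by (simp add: N_def power2_eq_square algebra_simps)
    then have r1: "d1 = s t * (- \<sigma>$3)" using ph' Nz unfolding st by (simp add: field_simps)
    have "d2 * N - (d1 * (- \<sigma>$3) + d2 * \<sigma>$2) * \<sigma>$2 = \<sigma>$3 * (d1 * \<sigma>$2 + d2 * \<sigma>$3)"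
      by (simp add: N_def power2_eq_square algebra_simps)
    then have r2: "d2 = s t * \<sigma>$2" using ph' Nz unfolding st by (simp add: field_simps)
    show ?thesis using r1 r2 by (simp add: complex_eq_iff d1_def d2_def)
  qed
  with sp show ?thesis by blast
qed


lemma tangent:
  assumes hyp: "hyperbolic \<sigma>" and x0: "x0 \<in> disk" "phi \<sigma> x0 = 0"
  shows "tangent_towards \<sigma> (axis \<sigma>) x0 (Complex (- \<sigma>$3) (\<sigma>$2))"
proof -
  define w where "w = Complex (- \<sigma>$3) (\<sigma>$2)"
  have N: "(\<sigma>$2)^2 + (\<sigma>$3)^2 > 0"
    using hyp by (simp add: hyperbolic_def mink_def power2_eq_square) (smt (verit) zero_le_square)
  have w0: "w \<noteq> 0"
  proof
    assume "w = 0" then have "\<sigma>$2 = 0" "\<sigma>$3 = 0" by (auto simp: w_def complex_eq_iff)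
    with N show False by simp
  qed
  obtain e where e: "e > 0" "ball x0 e \<subseteq> disk"
    using x0 unfolding disk_def by (meson open_ball openE)
  have "\<forall>s. \<bar>s\<bar> < e / norm w \<longrightarrow> x0 + of_real s * w \<in> axis \<sigma>"
  proof (intro allI impI)
    fix s :: real assume "\<bar>s\<bar> < e / norm w"
    then have "norm (of_real s * w) < e" using w0 by (simp add: norm_mult field_simps)
    then have "x0 + of_real s * w \<in> disk" using e by (auto simp: dist_norm intro!: subsetD[OF e(2)])
    moreover have "phi \<sigma> (x0 + of_real s * w) = 0"
      using x0(2) by (simp add: phi_eq w_def algebra_simps)
    ultimately show "x0 + of_real s * w \<in> axis \<sigma>" using axis_iff by blast
  qed
  moreover have "e / norm w > 0" using e w0 by simp
  ultimately show ?thesis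
    unfolding tangent_towards_def w_def[symmetric]
    using w0 flow_forward[OF hyp x0] unfolding w_def by blast
qed

lemma phi_lin: "phi \<sigma> ((1 - t) *\<^sub>R p + t *\<^sub>R q) = (1 - t) * phi \<sigma> p + t * phi \<sigma> q"
  by (simp add: phi_eq algebra_simps)

lemma arc_contra:
  assumes hyp: "hyperbolic \<sigma>" and tr: "translates \<epsilon> \<sigma> (axis \<sigma>) A B"
    and pq: "p \<in> A" "q \<in> B" "p \<in> disk" "q \<in> disk"
    and sg: "\<epsilon> * phi \<sigma> p \<ge> 0" "\<epsilon> * phi \<sigma> q \<le> 0" "phi \<sigma> p \<noteq> phi \<sigma> q"
    and eps: "\<epsilon> = 1 \<or> \<epsilon> = -1"
  shows False
proof -
  define fp where "fp = phi \<sigma> p"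
  define fq where "fq = phi \<sigma> q"
  define c where "c = linepath p q"
  define t0 where "t0 = fp / (fp - fq)"
  have pq': "p \<noteq> q" using sg by auto
  have ne: "fp - fq \<noteq> 0" using sg by (simp add: fp_def fq_def)
  have t0: "t0 \<in> {0..1}"
    using eps sg ne by (auto simp: t0_def fp_def fq_def field_simps)
  have cd: "c t \<in> disk" if "t \<in> {0..1}" for t
  proof -
    have "c t \<in> closed_segment p q" using linepath_in_path[OF that] by (simp add: c_def)
    also have "\<dots> \<subseteq> disk" using pq by (intro closed_segment_subset) (auto simp: disk_def)
    finally show ?thesis .
  qed
  have pc: "phi \<sigma> (c t) = (1 - t) * fp + t * fq" for t
    by (simp add: c_def linepath_def phi_lin fp_def fq_def)
  have cross: "{t \<in> {0..1}. c t \<in> axis \<sigma>} = {t0}"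
  proof -
    have "t \<in> {0..1} \<Longrightarrow> c t \<in> axis \<sigma> \<longleftrightarrow> t = t0" for t
      using axis_iff[OF cd, of t \<sigma>] pc[of t] ne
      by (auto simp: t0_def field_simps)
    then show ?thesis using t0 by auto
  qed
  have x0: "c t0 \<in> disk" "phi \<sigma> (c t0) = 0"
  proof -
    have "c t0 \<in> axis \<sigma>" using cross by blast
    then show "c t0 \<in> disk" "phi \<sigma> (c t0) = 0" using cd[OF t0] axis_iff[OF cd[OF t0]] by auto
  qed
  have arc: "arc c" using pq' by (simp add: c_def arc_linepath)
  have pim: "path_image c \<subseteq> disk" using cd by (auto simp: path_image_def)
  have dv: "(c has_vector_derivative (q - p)) (at t0 within {0..1})"
    unfolding c_def by (rule has_vector_derivative_linepath_within)
  have o: "orient (q - p) (Complex (- \<sigma>$3) (\<sigma>$2)) = fq - fp"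
    by (simp add: orient_def fp_def fq_def phi_eq algebra_simps)
  have "\<epsilon> * orient (q - p) (Complex (- \<sigma>$3) (\<sigma>$2)) > 0"
    apply (rule tr[unfolded translates_def, rule_format])
    using arc pim pq tangent[OF hyp x0] cross dv o ne by (auto simp: c_def)
  then have "0 < \<epsilon> * fq - \<epsilon> * fp" unfolding o by (simp add: algebra_simps)
  then show False using sg unfolding fp_def fq_def by linarith
qed


lemma geo_facts:
  assumes "geodesic l"
  shows "open (disk - l)" "\<exists>p\<in>l. p \<in> disk"
proof -
  obtain a b where ab: "a \<noteq> b" "norm a = 1" "norm b = 1" "l = open_segment a b"
    using assms unfolding geodesic_def by blast
  have "disk - l = disk - closed_segment a b"
    using ab by (auto simp: open_segment_def disk_def)
  then show "open (disk - l)"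
    by (simp add: disk_def open_Diff closed_segment)
  have m: "midpoint a b \<in> l" using ab by simp
  have "(Re a)^2 + (Im a)^2 = 1" "(Re b)^2 + (Im b)^2 = 1"
    using ab by (simp_all add: cmod_power2[symmetric])
  moreover have "(Re a - Re b)^2 + (Im a - Im b)^2 > 0"
    using ab(1) by (metis cmod_power2 diff_zero minus_complex.sel(1) minus_complex.sel(2) norm_eq_zero right_minus_eq zero_less_power2)
  ultimately have "(Re (midpoint a b))^2 + (Im (midpoint a b))^2 < 1"
    by (simp add: midpoint_def power2_eq_square algebra_simps)
  then have "midpoint a b \<in> disk"
    using abs_square_less_1[of "cmod (midpoint a b)"] by (simp add: disk_def cmod_power2[symmetric])
  with m show "\<exists>p\<in>l. p \<in> disk" by blast
qed

lemma nz_point: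
  assumes "open U" "U \<noteq> {}" "hyperbolic \<sigma>"
  shows "\<exists>q\<in>U. phi \<sigma> q \<noteq> 0"
proof (rule ccontr)
  assume "\<not> ?thesis"
  then have z: "\<And>q. q \<in> U \<Longrightarrow> phi \<sigma> q = 0" by blast
  obtain x where x: "x \<in> U" using assms by blast
  obtain r where r: "r > 0" "ball x r \<subseteq> U" using assms(1) x openE by blast
  have "x + of_real (r/2) \<in> U" "x + \<i> * of_real (r/2) \<in> U"
    using r by (auto intro!: subsetD[OF r(2)] simp: dist_norm norm_mult)
  with z x have "phi \<sigma> (x + of_real (r/2)) - phi \<sigma> x = 0" "phi \<sigma> (x + \<i> * of_real (r/2)) - phi \<sigma> x = 0"
    by auto
  then have "\<sigma>$2 = 0" "\<sigma>$3 = 0" using r by (auto simp: phi_eq algebra_simps)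
  with assms(3) show False by (simp add: hyperbolic_def mink_def)
qed


lemma main:
  assumes geo: "geodesic l" and S1: "S1 \<in> lamination_strata {l}" and S2: "S2 \<in> lamination_strata {l}"
    and eq: "inf_earthquake \<epsilon> {l} E K" and eps: "\<epsilon> = 1 \<or> \<epsilon> = -1"
  shows "(\<forall>x\<in>closure S2. \<epsilon> * phi (K S2 - K S1) x \<ge> 0) \<and>
         (\<forall>x\<in>closure S1. \<epsilon> * phi (K S2 - K S1) x \<le> 0)"
proof (cases "K S2 - K S1 = 0")
  case True
  then show ?thesis by (simp add: phi_eq)
next
  case False
  define \<sigma> where "\<sigma> = K S2 - K S1"
  have nv: "\<not> (\<forall>\<eta>\<in>disk. Lam \<sigma> \<eta> = 0)" using Lam_zero[of \<sigma>] False unfolding \<sigma>_def by blast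
  have S12: "S1 \<noteq> S2" using False by auto
  from eq S1 S2 nv have hyp: "hyperbolic \<sigma>" and ws: "weakly_separates (axis \<sigma>) S1 S2"
    and tr: "translates \<epsilon> \<sigma> (axis \<sigma>) S1 S2"
    unfolding inf_earthquake_def \<sigma>_def by blast+
  from ws obtain C C' where C: "C \<in> components (disk - axis \<sigma>)" "C' \<in> components (disk - axis \<sigma>)"
    "C \<noteq> C'" "S1 \<subseteq> closure C" "S2 \<subseteq> closure C'"
    unfolding weakly_separates_def by blast
  obtain \<delta> where d: "\<delta> = 1 \<or> \<delta> = -1" "\<forall>x\<in>C. \<delta> * phi \<sigma> x < 0" "\<forall>x\<in>C'. \<delta> * phi \<sigma> x > 0"
  proof -
    have u1: False if "\<forall>x\<in>C. phi \<sigma> x > 0" "\<forall>x\<in>C'. phi \<sigma> x > 0"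
      using comp_unique[OF C(1,2), of 1] that C(3) by auto
    have u2: False if "\<forall>x\<in>C. phi \<sigma> x < 0" "\<forall>x\<in>C'. phi \<sigma> x < 0"
      using comp_unique[OF C(1,2), of "-1"] that C(3) by auto
    from comp_sign[OF C(1)] comp_sign[OF C(2)] u1 u2 that[of 1] that[of "-1"] show thesis
      by auto
  qed
  have cl1: "\<delta> * phi \<sigma> x \<le> 0" if "x \<in> closure S1" for x
  proof -
    have "x \<in> closure C" using that C(4) closure_mono closure_closure by blast
    have cc: "continuous_on (closure C) (\<lambda>x. \<delta> * phi \<sigma> x)" by (intro continuous_intros)
    show ?thesis
      using continuous_le_on_closure[OF cc \<open>x \<in> closure C\<close>, of 0] d(2) by (auto intro: less_imp_le)
  qed
  have cl2: "\<delta> * phi \<sigma> x \<ge> 0" if "x \<in> closure S2" for x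
  proof -
    have "x \<in> closure C'" using that C(5) closure_mono closure_closure by blast
    have cc: "continuous_on (closure C') (\<lambda>x. \<delta> * phi \<sigma> x)" by (intro continuous_intros)
    show ?thesis
      using continuous_ge_on_closure[OF cc \<open>x \<in> closure C'\<close>, of 0] d(3) by (auto intro: less_imp_le)
  qed
  have "\<delta> = \<epsilon>"
  proof (rule ccontr)
    assume "\<delta> \<noteq> \<epsilon>"
    then have de: "\<delta> = - \<epsilon>" using d(1) eps by auto
    have w1: "\<epsilon> * phi \<sigma> x \<ge> 0" if "x \<in> S1" for x
      using cl1[of x] closure_subset that de by fastforce
    have w2: "\<epsilon> * phi \<sigma> x \<le> 0" if "x \<in> S2" for x
      using cl2[of x] closure_subset that de by fastforce
    have pt: "\<exists>p\<in>S. p \<in> disk" if "S \<in> lamination_strata {l}" for S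
    proof (cases "S = l")
      case True then show ?thesis using geo_facts(2)[OF geo] by blast
    next
      case False
      then have "S \<in> components (disk - l)" using that unfolding lamination_strata_def by auto
      then show ?thesis using in_components_nonempty in_components_subset by blast
    qed
    have comp: "S \<in> components (disk - l)" if "S \<in> lamination_strata {l}" "S \<noteq> l" for S
      using that unfolding lamination_strata_def by auto
    have nzc: "\<exists>q\<in>S. q \<in> disk \<and> phi \<sigma> q \<noteq> 0" if "S \<in> components (disk - l)" for S
      using nz_point[OF open_components[OF geo_facts(1)[OF geo] that] in_components_nonempty[OF that] hyp]
        in_components_subset[OF that] by blast
    have e0: "\<epsilon> \<noteq> 0" using eps by auto
    have "\<exists>p q. p \<in> S1 \<and> q \<in> S2 \<and> p \<in> disk \<and> q \<in> disk \<and> phi \<sigma> p \<noteq> phi \<sigma> q"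
    proof (cases "S2 = l")
      case False
      obtain q where q: "q \<in> S2" "q \<in> disk" "phi \<sigma> q \<noteq> 0" using nzc[OF comp[OF S2 False]] by blast
      obtain p where p: "p \<in> S1" "p \<in> disk" using pt[OF S1] by blast
      have "\<epsilon> * phi \<sigma> q < 0" using w2[OF q(1)] q(3) e0 by (simp add: order_le_less)
      moreover have "\<epsilon> * phi \<sigma> p \<ge> 0" using w1[OF p(1)] .
      ultimately have "phi \<sigma> p \<noteq> phi \<sigma> q" by auto
      with p q show ?thesis by blast
    next
      case True
      then have S1l: "S1 \<noteq> l" using S12 by auto
      obtain p where p: "p \<in> S1" "p \<in> disk" "phi \<sigma> p \<noteq> 0" using nzc[OF comp[OF S1 S1l]] by blast
      obtain q where q: "q \<in> S2" "q \<in> disk" using pt[OF S2] by blast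
      have "\<epsilon> * phi \<sigma> p > 0" using w1[OF p(1)] p(3) e0 by (simp add: order_le_less)
      moreover have "\<epsilon> * phi \<sigma> q \<le> 0" using w2[OF q(1)] .
      ultimately have "phi \<sigma> p \<noteq> phi \<sigma> q" by auto
      with p q show ?thesis by blast
    qed
    then obtain p q where pq: "p \<in> S1" "q \<in> S2" "p \<in> disk" "q \<in> disk" "phi \<sigma> p \<noteq> phi \<sigma> q" by blast
    show False by (rule arc_contra[OF hyp tr pq(1-4) w1[OF pq(1)] w2[OF pq(2)] pq(5) eps])
  qed
  then show ?thesis using cl1 cl2 by (simp add: \<sigma>_def)
qed

theorem lemma3p11:
  fixes l :: "complex set" and E :: "complex \<Rightarrow> complex" and K :: "complex set \<Rightarrow> real^3"
    and S1 S2 :: "complex set"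
  assumes "geodesic l"
    and "S1 \<in> lamination_strata {l}" and "S2 \<in> lamination_strata {l}"
  shows "(left_inf_earthquake {l} E K \<longrightarrow>
            (\<forall>x\<in>closure S2. phi (K S2 - K S1) x \<ge> 0) \<and>
            (\<forall>x\<in>closure S1. phi (K S2 - K S1) x \<le> 0)) \<and>
         (right_inf_earthquake {l} E K \<longrightarrow>
            (\<forall>x\<in>closure S2. phi (K S2 - K S1) x \<le> 0) \<and>
            (\<forall>x\<in>closure S1. phi (K S2 - K S1) x \<ge> 0))"
  using main[OF assms, of 1 E K] main[OF assms, of "-1" E K]
  by (auto simp: left_inf_earthquake_def right_inf_earthquake_def)

end
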